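(* Suppose the user paths $p_1,\dots,p_k$ are pairwise edge-disjoint. Then the set function $A\mapsto\Lambda(A,P)$ on $2^E$ is (1) monotone: $\Lambda(A,P)\le\Lambda(B,P)$ whenever $A\subseteq B\subseteq E$; and (2) submodular: for all $A\subseteq B\subseteq E$ and $e\in E$, $\Lambda(A\cup\{e\},P)-\Lambda(A,P)\ge\Lambda(B\cup\{e\},P)-\Lambda(B,P)$.
   Context: $G=(V,E)$ is a simple directed acyclic graph with capacities $C\in\mathbb{R}_{\ge0}^E$, and $\gamma$ is a budget with $0<\gamma\le\min_eC(e)$. User paths $P=\{p_1,\dots,p_k\}$ are directed paths in $G$ (viewed as edge sets) with initial flow values $\lambda_i\ge0$ such that $\sum_{i:e\in p_i}\lambda_i\le C(e)$ for all $e$. For $A\subseteq E$ let $\tilde C_A(e)=C(e)-\gamma\cdot\mathbf{1}_{\{e\in A\}}$, let $T(A,P)$ be the optimal value of: maximize $\sum_i\tilde\lambda_i$ s.t. $\sum_{i:e\in p_i}\tilde\lambda_i\le\tilde C_A(e)$ for all $e\in E$, $0\le\tilde\lambda_i\le\lambda_i$; and $\Lambda(A,P)=\sum_i\lambda_i-T(A,P)$. *)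

theory Defs
  imports "HOL-Analysis.Analysis"
begin

(* A directed graph is given by a finite edge set E of ordered vertex pairs
   (simple: no parallel edges by construction; acyclic via 'acyclic E'). *)

definition is_dpath :: "('v \<times> 'v) set \<Rightarrow> ('v \<times> 'v) set \<Rightarrow> bool" where
  "is_dpath E p \<longleftrightarrow> (\<exists>vs. length vs \<ge> 2 \<and> distinct vs \<and>
      (\<forall>j < length vs - 1. (vs ! j, vs ! Suc j) \<in> E) \<and>
      p = {(vs ! j, vs ! Suc j) | j. j < length vs - 1})"

definition red_cap :: "('v \<times> 'v \<Rightarrow> real) \<Rightarrow> real \<Rightarrow> ('v \<times> 'v) set \<Rightarrow> ('v \<times> 'v) \<Rightarrow> real" where
  "red_cap C \<gamma> A e = C e - \<gamma> * (if e \<in> A then 1 else 0)"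

definition feasible_flow ::
  "('v \<times> 'v) set \<Rightarrow> ('v \<times> 'v \<Rightarrow> real) \<Rightarrow> real \<Rightarrow> nat \<Rightarrow> (nat \<Rightarrow> ('v \<times> 'v) set)
    \<Rightarrow> (nat \<Rightarrow> real) \<Rightarrow> ('v \<times> 'v) set \<Rightarrow> (nat \<Rightarrow> real) \<Rightarrow> bool" where
  "feasible_flow E C \<gamma> k p lam A fl \<longleftrightarrow>
     (\<forall>e \<in> E. (\<Sum>i \<in> {i. i < k \<and> e \<in> p i}. fl i) \<le> red_cap C \<gamma> A e) \<and>
     (\<forall>i < k. 0 \<le> fl i \<and> fl i \<le> lam i)"

(* T(A,P): optimal value of the LP (its supremum, which is attained) *)
definition T_val ::
  "('v \<times> 'v) set \<Rightarrow> ('v \<times> 'v \<Rightarrow> real) \<Rightarrow> real \<Rightarrow> nat \<Rightarrow> (nat \<Rightarrow> ('v \<times> 'v) set)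
    \<Rightarrow> (nat \<Rightarrow> real) \<Rightarrow> ('v \<times> 'v) set \<Rightarrow> real" where
  "T_val E C \<gamma> k p lam A = Sup {(\<Sum>i<k. fl i) | fl. feasible_flow E C \<gamma> k p lam A fl}"

definition Lambda_val ::
  "('v \<times> 'v) set \<Rightarrow> ('v \<times> 'v \<Rightarrow> real) \<Rightarrow> real \<Rightarrow> nat \<Rightarrow> (nat \<Rightarrow> ('v \<times> 'v) set)
    \<Rightarrow> (nat \<Rightarrow> real) \<Rightarrow> ('v \<times> 'v) set \<Rightarrow> real" where
  "Lambda_val E C \<gamma> k p lam A = (\<Sum>i<k. lam i) - T_val E C \<gamma> k p lam A"

end

theory Submission
  imports Defs
begin

lemma dpath_sub: "is_dpath E p \<Longrightarrow> p \<subseteq> E"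
  unfolding is_dpath_def by auto

definition gv :: "('v \<times> 'v \<Rightarrow> real) \<Rightarrow> real \<Rightarrow> real \<Rightarrow> ('v \<times> 'v) set \<Rightarrow> real" where
  "gv C \<gamma> l S = Max (insert 0 ((\<lambda>e. l - C e + \<gamma>) ` S))"

lemma gv_ge0: "finite S \<Longrightarrow> 0 \<le> gv C \<gamma> l S"
  unfolding gv_def by simp

lemma gv_ge: "finite S \<Longrightarrow> e \<in> S \<Longrightarrow> l - C e + \<gamma> \<le> gv C \<gamma> l S"
  unfolding gv_def by simp

lemma gv_le: "finite S \<Longrightarrow> 0 \<le> l \<Longrightarrow> (\<forall>e\<in>S. \<gamma> \<le> C e) \<Longrightarrow> gv C \<gamma> l S \<le> l"
  unfolding gv_def by auto

lemma gv_mono: "finite T \<Longrightarrow> S \<subseteq> T \<Longrightarrow> gv C \<gamma> l S \<le> gv C \<gamma> l T"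
  unfolding gv_def by (rule Max_mono) auto

lemma gv_insert: "finite S \<Longrightarrow> gv C \<gamma> l (insert e S) = max (l - C e + \<gamma>) (gv C \<gamma> l S)"
proof -
  assume f: "finite S"
  define h where "h = (\<lambda>e. l - C e + \<gamma>)"
  have 1: "insert 0 (h ` insert e S) = insert (h e) (insert 0 (h ` S))"
    by auto
  have 2: "Max (insert (h e) (insert 0 (h ` S))) = max (h e) (Max (insert 0 (h ` S)))"
    by (rule Max_insert) (use f in auto)
  show ?thesis unfolding gv_def h_def[symmetric] 1 2 by (simp add: h_def)
qed

theorem lemma1:
  fixes E :: "('v \<times> 'v) set" and C :: "'v \<times> 'v \<Rightarrow> real" and \<gamma> :: real
    and k :: nat and p :: "nat \<Rightarrow> ('v \<times> 'v) set" and lam :: "nat \<Rightarrow> real"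
  assumes finE: "finite E"
    and dag: "acyclic E"
    and cap_nonneg: "\<forall>e \<in> E. 0 \<le> C e"
    and gamma_pos: "0 < \<gamma>"
    and gamma_le: "\<forall>e \<in> E. \<gamma> \<le> C e"
    and paths: "\<forall>i < k. is_dpath E (p i)"
    and lam_nonneg: "\<forall>i < k. 0 \<le> lam i"
    and lam_feas: "\<forall>e \<in> E. (\<Sum>i \<in> {i. i < k \<and> e \<in> p i}. lam i) \<le> C e"
    and disjoint: "\<forall>i < k. \<forall>j < k. i \<noteq> j \<longrightarrow> p i \<inter> p j = {}"
  shows "(\<forall>A B. A \<subseteq> B \<and> B \<subseteq> E \<longrightarrow>
            Lambda_val E C \<gamma> k p lam A \<le> Lambda_val E C \<gamma> k p lam B)
       \<and> (\<forall>A B e. A \<subseteq> B \<and> B \<subseteq> E \<and> e \<in> E \<longrightarrow>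
            Lambda_val E C \<gamma> k p lam (A \<union> {e}) - Lambda_val E C \<gamma> k p lam A
              \<ge> Lambda_val E C \<gamma> k p lam (B \<union> {e}) - Lambda_val E C \<gamma> k p lam B)"
proof -
  have sub: "\<And>i. i < k \<Longrightarrow> p i \<subseteq> E" using paths dpath_sub by blast
  have finp: "\<And>i. i < k \<Longrightarrow> finite (p i)" using sub finE finite_subset by blast
  have single: "\<And>i e. i < k \<Longrightarrow> e \<in> p i \<Longrightarrow> {j. j < k \<and> e \<in> p j} = {i}"
    using disjoint by blast
  have none: "\<And>e. (\<not> (\<exists>i<k. e \<in> p i)) \<Longrightarrow> {j. j < k \<and> e \<in> p j} = {}" by blast
  have lamC: "\<And>i e. i < k \<Longrightarrow> e \<in> p i \<Longrightarrow> lam i \<le> C e"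
    using lam_feas single sub by fastforce
  define g where "g A i = gv C \<gamma> (lam i) (p i \<inter> A)" for A i
  have Lam: "Lambda_val E C \<gamma> k p lam A = (\<Sum>i<k. g A i)" for A
  proof -
    define f where "f i = lam i - g A i" for i
    have fin: "\<And>i. i < k \<Longrightarrow> finite (p i \<inter> A)" using finp by blast
    have feas: "feasible_flow E C \<gamma> k p lam A f"
      unfolding feasible_flow_def
    proof (intro conjI ballI allI impI)
      fix e assume e: "e \<in> E"
      show "(\<Sum>i \<in> {i. i < k \<and> e \<in> p i}. f i) \<le> red_cap C \<gamma> A e"
      proof (cases "\<exists>i<k. e \<in> p i")
        case True
        then obtain i where i: "i < k" "e \<in> p i" by blast
        have "f i \<le> red_cap C \<gamma> A e"
        proof (cases "e \<in> A")
          case True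
          have "lam i - C e + \<gamma> \<le> g A i" unfolding g_def
            using gv_ge[OF fin[OF i(1)]] i True by blast
          then show ?thesis using True unfolding f_def red_cap_def by simp
        next
          case False
          have "0 \<le> g A i" unfolding g_def using gv_ge0 fin i by blast
          then show ?thesis using False lamC[OF i] unfolding f_def red_cap_def by simp
        qed
        then show ?thesis using single[OF i] by simp
      next
        case False
        have "0 \<le> C e" "\<gamma> \<le> C e" using cap_nonneg[rule_format, OF e] gamma_le[rule_format, OF e] by simp_all
        then have "0 \<le> red_cap C \<gamma> A e" unfolding red_cap_def by (cases "e \<in> A") auto
        moreover have emp: "{i. i < k \<and> e \<in> p i} = {}" using False by blast
        moreover have "(\<Sum>i \<in> {i. i < k \<and> e \<in> p i}. f i) = 0" by (simp only: emp sum.empty)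
        ultimately show ?thesis by linarith
      qed
    next
      fix i assume i: "i < k"
      have "\<forall>e\<in>p i \<inter> A. \<gamma> \<le> C e" using gamma_le sub[OF i] by blast
      then have "g A i \<le> lam i" unfolding g_def
        using gv_le[OF fin[OF i]] lam_nonneg i by blast
      then show "0 \<le> f i" unfolding f_def by simp
      show "f i \<le> lam i" unfolding f_def g_def using gv_ge0[OF fin[OF i]] by simp
    qed
    have opt: "(\<Sum>i<k. fl i) \<le> (\<Sum>i<k. f i)" if fl: "feasible_flow E C \<gamma> k p lam A fl" for fl
    proof (rule sum_mono)
      fix i assume "i \<in> {..<k}" then have i: "i < k" by simp
      have le: "fl i \<le> lam i" using fl i unfolding feasible_flow_def by blast
      have "\<forall>e \<in> p i \<inter> A. fl i \<le> C e - \<gamma>"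
      proof
        fix e assume e: "e \<in> p i \<inter> A"
        then have "e \<in> E" using sub i by blast
        then have "(\<Sum>j \<in> {j. j < k \<and> e \<in> p j}. fl j) \<le> red_cap C \<gamma> A e"
          using fl unfolding feasible_flow_def by blast
        then show "fl i \<le> C e - \<gamma>" using single[OF i] e unfolding red_cap_def by simp
      qed
      note allb = this
      have bd: "lam i - C e + \<gamma> \<le> lam i - fl i" if ee: "e \<in> p i \<inter> A" for e
        using bspec[OF allb ee] by linarith
      have "g A i \<le> lam i - fl i" unfolding g_def gv_def
      proof (rule Max.boundedI)
        show "finite (insert 0 ((\<lambda>e. lam i - C e + \<gamma>) ` (p i \<inter> A)))" using fin[OF i] by simp
        show "insert 0 ((\<lambda>e. lam i - C e + \<gamma>) ` (p i \<inter> A)) \<noteq> {}" by simp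
        fix x assume "x \<in> insert 0 ((\<lambda>e. lam i - C e + \<gamma>) ` (p i \<inter> A))"
        then consider "x = 0" | e where "e \<in> p i \<inter> A" "x = lam i - C e + \<gamma>" by blast
        then show "x \<le> lam i - fl i" using le bd by cases auto
      qed
      then show "fl i \<le> f i" unfolding f_def by simp
    qed
    have "T_val E C \<gamma> k p lam A = (\<Sum>i<k. f i)"
      unfolding T_val_def
      by (rule cSup_eq_maximum) (use feas opt in auto)
    then show ?thesis unfolding Lambda_val_def f_def by (simp add: sum_subtractf)
  qed
  show ?thesis
  proof (intro conjI allI impI)
    fix A B assume AB: "A \<subseteq> B \<and> B \<subseteq> E"
    show "Lambda_val E C \<gamma> k p lam A \<le> Lambda_val E C \<gamma> k p lam B"
      unfolding Lam g_def
    proof (rule sum_mono)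
      fix i assume "i \<in> {..<k}"
      then have "finite (p i \<inter> B)" using finp by simp
      moreover have "p i \<inter> A \<subseteq> p i \<inter> B" using AB by blast
      ultimately show "gv C \<gamma> (lam i) (p i \<inter> A) \<le> gv C \<gamma> (lam i) (p i \<inter> B)" by (rule gv_mono)
    qed
  next
    fix A B e assume AB: "A \<subseteq> B \<and> B \<subseteq> E \<and> e \<in> E"
    have "g (B \<union> {e}) i - g B i \<le> g (A \<union> {e}) i - g A i" if i: "i < k" for i
    proof (cases "e \<in> p i")
      case True
      have fA: "finite (p i \<inter> A)" "finite (p i \<inter> B)" using finp i by auto
      have q: "p i \<inter> (A \<union> {e}) = insert e (p i \<inter> A)" "p i \<inter> (B \<union> {e}) = insert e (p i \<inter> B)"
        using True by auto
      have eqs: "g (A \<union> {e}) i = max (lam i - C e + \<gamma>) (g A i)"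
        "g (B \<union> {e}) i = max (lam i - C e + \<gamma>) (g B i)"
        unfolding g_def q by (rule gv_insert[OF fA(1)], rule gv_insert[OF fA(2)])
      have "g A i \<le> g B i" unfolding g_def using gv_mono fA AB by blast
      then show ?thesis unfolding eqs by linarith
    next
      case False
      then have "p i \<inter> (A \<union> {e}) = p i \<inter> A" "p i \<inter> (B \<union> {e}) = p i \<inter> B" by auto
      then show ?thesis unfolding g_def by simp
    qed
    then have "(\<Sum>i<k. g (B \<union> {e}) i - g B i) \<le> (\<Sum>i<k. g (A \<union> {e}) i - g A i)"
      by (intro sum_mono) auto
    then show "Lambda_val E C \<gamma> k p lam (A \<union> {e}) - Lambda_val E C \<gamma> k p lam A
              \<ge> Lambda_val E C \<gamma> k p lam (B \<union> {e}) - Lambda_val E C \<gamma> k p lam B"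
      unfolding Lam by (simp add: sum_subtractf)
  qed
qed

end
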